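(* Let $H$ be a complex infinite-dimensional separable Hilbert space. A Bessel sequence $(f_n)_{n=1}^\infty$ in $H$ admits a finite extension to a frame (i.e. there is a finite sequence $(x_n)_{n=1}^k$ in $H$ such that $x_1,\dots,x_k,f_1,f_2,\dots$ is a frame for $H$) if and only if there exists a Bessel sequence in $H$ that is essentially dual to $(f_n)_{n=1}^\infty$.
   Context: Bessel sequences $(f_n)$ and $(g_n)$ in $H$ with analysis operators $U$ and $V$ (where $Ux=(\langle x,f_n\rangle)_n\in\ell^2$, $Vx=(\langle x,g_n\rangle)_n\in\ell^2$) are called essentially dual to each other if $I-V^*U$ is a compact operator on $H$. *)

theory Defs
  imports "HOL-Analysis.Analysis"
begin

text \<open>HOL-Analysis has no complex inner product spaces, so we introduce the standard
axioms of a complex inner product space (inner product linear in the first argument,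
conjugate linear in the second), whose norm is the induced one.\<close>

class complex_inner = real_normed_vector +
  fixes scaleC :: "complex \<Rightarrow> 'a \<Rightarrow> 'a" (infixr \<open>*\<^sub>C\<close> 75)
    and cinner :: "'a \<Rightarrow> 'a \<Rightarrow> complex"
  assumes scaleC_add_right: "a *\<^sub>C (x + y) = a *\<^sub>C x + a *\<^sub>C y"
    and scaleC_add_left: "(a + b) *\<^sub>C x = a *\<^sub>C x + b *\<^sub>C x"
    and scaleC_scaleC: "a *\<^sub>C (b *\<^sub>C x) = (a * b) *\<^sub>C x"
    and scaleC_one: "1 *\<^sub>C x = x"
    and scaleC_of_real: "complex_of_real r *\<^sub>C x = r *\<^sub>R x"
    and cinner_commute: "cinner x y = cnj (cinner y x)"
    and cinner_add_left: "cinner (x + y) z = cinner x z + cinner y z"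
    and cinner_scaleC_left: "cinner (a *\<^sub>C x) y = a * cinner x y"
    and cinner_ge_zero: "Im (cinner x x) = 0 \<and> Re (cinner x x) \<ge> 0"
    and cinner_eq_zero_iff: "cinner x x = 0 \<longleftrightarrow> x = 0"
    and norm_eq_sqrt_cinner: "norm x = sqrt (Re (cinner x x))"

class complex_hilbert = complex_inner + complete_space

definition separable_type :: "'a::metric_space itself \<Rightarrow> bool" where
  "separable_type _ \<longleftrightarrow> (\<exists>D::'a set. countable D \<and> closure D = UNIV)"

definition finite_dim_complex :: "'a::complex_inner itself \<Rightarrow> bool" where
  "finite_dim_complex _ \<longleftrightarrow>
     (\<exists>F::'a set. finite F \<and> (\<forall>x. \<exists>c. x = (\<Sum>v\<in>F. c v *\<^sub>C v)))"

definition bessel_seq :: "(nat \<Rightarrow> 'a::complex_inner) \<Rightarrow> bool" where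
  "bessel_seq f \<longleftrightarrow> (\<exists>B>0. \<forall>x. summable (\<lambda>n. (cmod (cinner x (f n)))\<^sup>2) \<and>
       (\<Sum>n. (cmod (cinner x (f n)))\<^sup>2) \<le> B * (norm x)\<^sup>2)"

definition frame_seq :: "(nat \<Rightarrow> 'a::complex_inner) \<Rightarrow> bool" where
  "frame_seq f \<longleftrightarrow> (\<exists>A B. 0 < A \<and> (\<forall>x. summable (\<lambda>n. (cmod (cinner x (f n)))\<^sup>2) \<and>
       A * (norm x)\<^sup>2 \<le> (\<Sum>n. (cmod (cinner x (f n)))\<^sup>2) \<and>
       (\<Sum>n. (cmod (cinner x (f n)))\<^sup>2) \<le> B * (norm x)\<^sup>2))"

text \<open>V^* U x = sum_n <x,f_n> g_n, where U, V are the analysis operators of f, g.\<close>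
definition cross_frame_op :: "(nat \<Rightarrow> 'a::complex_inner) \<Rightarrow> (nat \<Rightarrow> 'a) \<Rightarrow> 'a \<Rightarrow> 'a" where
  "cross_frame_op f g x = (\<Sum>n. cinner x (f n) *\<^sub>C g n)"

definition compact_operator :: "('a::real_normed_vector \<Rightarrow> 'a) \<Rightarrow> bool" where
  "compact_operator T \<longleftrightarrow> compact (closure (T ` cball 0 1))"

definition essentially_dual :: "(nat \<Rightarrow> 'a::complex_inner) \<Rightarrow> (nat \<Rightarrow> 'a) \<Rightarrow> bool" where
  "essentially_dual f g \<longleftrightarrow> bessel_seq f \<and> bessel_seq g \<and>
     compact_operator (\<lambda>x. x - cross_frame_op f g x)"

end

theory Submission
  imports Defs
begin


lemma scaleC_zero_left[simp]: "(0::complex) *\<^sub>C (x::'a::complex_inner) = 0"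
  using scaleC_of_real[of 0 x] by simp

lemma scaleC_zero_right[simp]: "a *\<^sub>C (0::'a::complex_inner) = 0"
  using scaleC_add_right[of a 0 0] by simp

lemma scaleC_minus_left: "(- a) *\<^sub>C (x::'a::complex_inner) = - (a *\<^sub>C x)"
  using scaleC_add_left[of a "-a" x] by (simp add: eq_neg_iff_add_eq_0 add.commute)

lemma scaleC_minus_right: "a *\<^sub>C (- x::'a::complex_inner) = - (a *\<^sub>C x)"
  using scaleC_add_right[of a x "-x"] by (simp add: eq_neg_iff_add_eq_0 add.commute)

lemma scaleC_diff_right: "a *\<^sub>C (x - y::'a::complex_inner) = a *\<^sub>C x - a *\<^sub>C y"
  using scaleC_add_right[of a x "-y"] by (simp add: scaleC_minus_right)

lemma scaleC_diff_left: "(a - b) *\<^sub>C (x::'a::complex_inner) = a *\<^sub>C x - b *\<^sub>C x"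
  using scaleC_add_left[of a "-b" x] by (simp add: scaleC_minus_left)

lemma scaleC_scaleR: "a *\<^sub>C (r *\<^sub>R (x::'a::complex_inner)) = r *\<^sub>R (a *\<^sub>C x)"
  by (metis scaleC_of_real scaleC_scaleC mult.commute)

lemma scaleR_scaleC: "(r *\<^sub>R a) *\<^sub>C (x::'a::complex_inner) = r *\<^sub>R (a *\<^sub>C x)"
  by (metis scaleC_of_real scaleC_scaleC scaleR_conv_of_real)

lemma scaleC_sum_right: "a *\<^sub>C (\<Sum>i\<in>I. f i) = (\<Sum>i\<in>I. a *\<^sub>C (f i::'a::complex_inner))"
  by (induction I rule: infinite_finite_induct) (auto simp: scaleC_add_right)

lemma cinner_zero_left[simp]: "cinner (0::'a::complex_inner) y = 0"
  using cinner_add_left[of 0 0 y] by simp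

lemma cinner_zero_right[simp]: "cinner (x::'a::complex_inner) 0 = 0"
  using cinner_commute[of x 0] by simp

lemma cinner_add_right: "cinner (x::'a::complex_inner) (y + z) = cinner x y + cinner x z"
  by (metis cinner_add_left cinner_commute complex_cnj_add)

lemma cinner_scaleC_right: "cinner (x::'a::complex_inner) (a *\<^sub>C y) = cnj a * cinner x y"
  by (metis cinner_commute cinner_scaleC_left complex_cnj_mult)

lemma cinner_minus_left: "cinner (- x::'a::complex_inner) y = - cinner x y"
  using cinner_add_left[of x "-x" y] by (simp add: eq_neg_iff_add_eq_0 add.commute)

lemma cinner_minus_right: "cinner (x::'a::complex_inner) (- y) = - cinner x y"
  using cinner_add_right[of x y "-y"] by (simp add: eq_neg_iff_add_eq_0 add.commute)

lemma cinner_diff_left: "cinner (x - y::'a::complex_inner) z = cinner x z - cinner y z"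
  using cinner_add_left[of x "-y" z] by (simp add: cinner_minus_left)

lemma cinner_diff_right: "cinner (x::'a::complex_inner) (y - z) = cinner x y - cinner x z"
  using cinner_add_right[of x y "-z"] by (simp add: cinner_minus_right)

lemma cinner_scaleR_left: "cinner (r *\<^sub>R x::'a::complex_inner) y = of_real r * cinner x y"
  by (metis cinner_scaleC_left scaleC_of_real)

lemma cinner_scaleR_right: "cinner (x::'a::complex_inner) (r *\<^sub>R y) = of_real r * cinner x y"
  by (metis cinner_scaleC_right scaleC_of_real complex_cnj_complex_of_real)

lemma cinner_sum_left: "cinner (\<Sum>i\<in>I. f i) (y::'a::complex_inner) = (\<Sum>i\<in>I. cinner (f i) y)"
  by (induction I rule: infinite_finite_induct) (auto simp: cinner_add_left)

lemma cinner_sum_right: "cinner (y::'a::complex_inner) (\<Sum>i\<in>I. f i) = (\<Sum>i\<in>I. cinner y (f i))"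
  by (induction I rule: infinite_finite_induct) (auto simp: cinner_add_right)

lemma cinner_self: "cinner (x::'a::complex_inner) x = complex_of_real ((norm x)\<^sup>2)"
proof -
  have "Im (cinner x x) = 0" "Re (cinner x x) \<ge> 0" using cinner_ge_zero by auto
  moreover have "(norm x)\<^sup>2 = Re (cinner x x)" using norm_eq_sqrt_cinner[of x] calculation by simp
  ultimately show ?thesis by (simp add: complex_eq_iff)
qed

lemma norm_diff_sq: "(norm (x - y::'a::complex_inner))\<^sup>2 = (norm x)\<^sup>2 + (norm y)\<^sup>2 - 2 * Re (cinner x y)"
proof -
  have "complex_of_real ((norm (x-y))\<^sup>2) = cinner (x-y) (x-y)" by (simp add: cinner_self)
  also have "\<dots> = cinner x x - cinner x y - cinner y x + cinner y y"
    by (simp add: cinner_diff_left cinner_diff_right)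
  also have "\<dots> = of_real ((norm x)\<^sup>2) + of_real ((norm y)\<^sup>2) - (cinner x y + cnj (cinner x y))"
    by (simp add: cinner_self cinner_commute[of y x])
  also have "cinner x y + cnj (cinner x y) = of_real (2 * Re (cinner x y))"
    by (simp add: complex_add_cnj)
  finally show ?thesis by (metis of_real_add of_real_diff of_real_eq_iff)
qed



lemma quad_real_aux:
  fixes P Q c :: real
  assumes "P \<ge> 0" "Q \<ge> 0" "c \<ge> 0" and h: "\<And>t. P - 2 * t * c + t\<^sup>2 * c * Q \<ge> 0"
  shows "c \<le> P * Q"
proof (cases "Q = 0")
  case True
  show ?thesis
  proof (rule ccontr)
    assume "\<not> ?thesis" then have "c > 0" using True by simp
    have "P - 2 * ((P+1)/(2*c)) * c + ((P+1)/(2*c))\<^sup>2 * c * Q \<ge> 0" by (rule h)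
    then show False using True \<open>c>0\<close> by (simp add: field_simps)
  qed
next
  case False
  then have "Q > 0" using assms by simp
  have "P - 2 * (1/Q) * c + (1/Q)\<^sup>2 * c * Q \<ge> 0" by (rule h)
  then have "P - c / Q \<ge> 0" using \<open>Q>0\<close> by (simp add: power2_eq_square field_simps)
  then show ?thesis using \<open>Q>0\<close> by (simp add: field_simps)
qed

lemma form_cauchy_schwarz:
  fixes p :: "'a::complex_inner \<Rightarrow> 'a \<Rightarrow> complex"
  assumes padd: "\<And>x y z. p (x + y) z = p x z + p y z"
    and pscale: "\<And>a x y. p (a *\<^sub>C x) y = a * p x y"
    and pherm: "\<And>x y. p x y = cnj (p y x)"
    and ppos: "\<And>x. 0 \<le> Re (p x x)"
  shows "(cmod (p x y))\<^sup>2 \<le> Re (p x x) * Re (p y y)"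
proof -
  have pminus: "p (- x) z = - p x z" for x z
    using padd[of x "-x" z] pscale[of 0 x z] by (simp add: eq_neg_iff_add_eq_0 add.commute)
  have pdiff: "p (x - y) z = p x z - p y z" for x y z
    using padd[of x "-y" z] by (simp add: pminus)
  have pdiffr: "p z (x - y) = p z x - p z y" for x y z
  proof -
    have "p z (x - y) = cnj (p (x - y) z)" by (rule pherm)
    also have "\<dots> = cnj (p x z) - cnj (p y z)" by (simp add: pdiff)
    also have "\<dots> = p z x - p z y" by (simp only: pherm[of z x] pherm[of z y])
    finally show ?thesis .
  qed
  have pscaler: "p x (b *\<^sub>C y) = cnj b * p x y" for x y b
  proof -
    have "p x (b *\<^sub>C y) = cnj (p (b *\<^sub>C y) x)" by (rule pherm)
    also have "\<dots> = cnj b * cnj (p y x)" by (simp add: pscale)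
    also have "\<dots> = cnj b * p x y" by (simp only: pherm[of x y])
    finally show ?thesis .
  qed
  have preal: "of_real (Re (p z z)) = p z z" for z
  proof -
    have "Im (p z z) = - Im (p z z)" using arg_cong[OF pherm[of z z], of Im] by simp
    then show ?thesis by (simp add: complex_eq_iff)
  qed
  define a where "a = p x y"
  have pyx: "p y x = cnj a" unfolding a_def by (rule pherm)
  have key: "Re (p x x) - 2 * t * (cmod a)\<^sup>2 + t\<^sup>2 * (cmod a)\<^sup>2 * Re (p y y) \<ge> 0" for t :: real
  proof -
    define s where "s = complex_of_real t * a"
    have "p (x - s *\<^sub>C y) (x - s *\<^sub>C y) = p x x - cnj s * a - s * cnj a + s * cnj s * p y y"
      by (simp add: pdiff pdiffr pscale pscaler a_def pyx algebra_simps)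
    also have "\<dots> = p x x - of_real t * (a * cnj a) - of_real t * (a * cnj a) + (of_real t)\<^sup>2 * (a * cnj a) * p y y"
      by (simp add: s_def algebra_simps power2_eq_square)
    finally have E: "p (x - s *\<^sub>C y) (x - s *\<^sub>C y) = p x x - of_real t * (a * cnj a) - of_real t * (a * cnj a) + (of_real t)\<^sup>2 * (a * cnj a) * p y y" .
    define c where "c = (cmod a)\<^sup>2"
    have ac: "a * cnj a = of_real c" unfolding c_def by (rule complex_norm_square[symmetric])
    have "Re (p (x - s *\<^sub>C y) (x - s *\<^sub>C y)) = Re (p x x) - 2 * t * c + t\<^sup>2 * c * Re (p y y)"
      unfolding E ac by (simp add: power2_eq_square)
    then show ?thesis using ppos[of "x - s *\<^sub>C y"] by (simp add: c_def)
  qed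
  have "(cmod a)\<^sup>2 \<le> Re (p x x) * Re (p y y)"
    by (rule quad_real_aux[OF ppos ppos _ key]) simp
  then show ?thesis by (simp add: a_def)
qed

lemma cauchy_schwarz: "cmod (cinner x y) \<le> norm (x::'a::complex_inner) * norm y"
proof -
  have "(cmod (cinner x y))\<^sup>2 \<le> Re (cinner x x) * Re (cinner y y)"
    by (rule form_cauchy_schwarz) (auto simp: cinner_add_left cinner_scaleC_left cinner_ge_zero intro: cinner_commute)
  also have "\<dots> = (norm x * norm y)\<^sup>2" by (simp add: cinner_self power_mult_distrib)
  finally show ?thesis by (meson norm_ge_zero power2_le_imp_le zero_le_mult_iff)
qed



subclass (in complex_hilbert) banach ..

lemma norm_scaleC: "norm (a *\<^sub>C (x::'a::complex_inner)) = cmod a * norm x"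
proof -
  have "complex_of_real ((norm (a *\<^sub>C x))\<^sup>2) = cinner (a *\<^sub>C x) (a *\<^sub>C x)"
    by (rule cinner_self[symmetric])
  also have "\<dots> = (a * cnj a) * cinner x x"
    by (simp add: cinner_scaleC_left cinner_scaleC_right mult.assoc)
  also have "\<dots> = of_real ((cmod a)\<^sup>2) * of_real ((norm x)\<^sup>2)"
    by (simp only: complex_norm_square cinner_self)
  also have "\<dots> = of_real ((cmod a * norm x)\<^sup>2)"
    by (simp only: of_real_mult power_mult_distrib)
  finally have "(norm (a *\<^sub>C x))\<^sup>2 = (cmod a * norm x)\<^sup>2" using of_real_eq_iff by blast
  then show ?thesis by (simp add: power2_eq_iff_nonneg)
qed

lemma bounded_linear_scaleC_right: "bounded_linear (\<lambda>x::'a::complex_inner. a *\<^sub>C x)"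
  by (rule bounded_linear_intro[where K="cmod a"]) (auto simp: scaleC_add_right scaleC_scaleR norm_scaleC)

lemma bounded_linear_cinner_left: "bounded_linear (\<lambda>x::'a::complex_inner. cinner x y)"
  by (rule bounded_linear_intro[where K="norm y"])
     (auto simp: cinner_add_left cinner_scaleR_left scaleR_conv_of_real cauchy_schwarz)

lemma bounded_linear_cinner_right: "bounded_linear (\<lambda>x::'a::complex_inner. cinner y x)"
proof -
  have "bounded_linear (\<lambda>x. cnj (cinner x y))"
    using bounded_linear_compose[OF bounded_linear_cnj bounded_linear_cinner_left[where y=y]] by simp
  moreover have "(\<lambda>x. cnj (cinner x y)) = (\<lambda>x. cinner y x)"
    by (rule ext) (metis cinner_commute)
  ultimately show ?thesis by simp
qed

lemma cinner_suminf_left: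
  assumes "summable X"
  shows "cinner (suminf X) (y::'a::complex_inner) = (\<Sum>n. cinner (X n) y)"
    and "summable (\<lambda>n. cinner (X n) y)"
  using bounded_linear.suminf[OF bounded_linear_cinner_left, of X] bounded_linear.summable[OF bounded_linear_cinner_left, of X] assms
  by auto

lemma cinner_suminf_right:
  assumes "summable X"
  shows "cinner (y::'a::complex_inner) (suminf X) = (\<Sum>n. cinner y (X n))"
    and "summable (\<lambda>n. cinner y (X n))"
  using bounded_linear.suminf[OF bounded_linear_cinner_right, of X] bounded_linear.summable[OF bounded_linear_cinner_right, of X] assms
  by auto

lemma scaleC_suminf:
  assumes "summable X"
  shows "a *\<^sub>C suminf X = (\<Sum>n. a *\<^sub>C (X n::'a::complex_inner))"
    and "summable (\<lambda>n. a *\<^sub>C X n)"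
  using bounded_linear.suminf[OF bounded_linear_scaleC_right, of X] bounded_linear.summable[OF bounded_linear_scaleC_right, of X] assms
  by auto

definition bessel_bd :: "(nat \<Rightarrow> 'a::complex_inner) \<Rightarrow> real \<Rightarrow> bool" where
  "bessel_bd g B \<longleftrightarrow> B > 0 \<and> (\<forall>x. summable (\<lambda>n. (cmod (cinner x (g n)))\<^sup>2) \<and>
       (\<Sum>n. (cmod (cinner x (g n)))\<^sup>2) \<le> B * (norm x)\<^sup>2)"

lemma bessel_seq_bd: "bessel_seq g \<longleftrightarrow> (\<exists>B. bessel_bd g B)"
  unfolding bessel_seq_def bessel_bd_def by auto

lemma synth_finite:
  assumes bd: "bessel_bd g B" and fin: "finite I"
  shows "(norm (\<Sum>i\<in>I. c i *\<^sub>C (g i::'a::complex_inner)))\<^sup>2 \<le> B * (\<Sum>i\<in>I. (cmod (c i))\<^sup>2)"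
proof -
  define s where "s = (\<Sum>i\<in>I. c i *\<^sub>C g i)"
  have B: "B > 0" and sm: "summable (\<lambda>n. (cmod (cinner s (g n)))\<^sup>2)"
    and le: "(\<Sum>n. (cmod (cinner s (g n)))\<^sup>2) \<le> B * (norm s)\<^sup>2"
    using bd unfolding bessel_bd_def by auto
  have "(norm s)\<^sup>2 = cmod (cinner s s)" unfolding cinner_self norm_of_real by simp
  also have "cinner s s = (\<Sum>i\<in>I. cnj (c i) * cinner s (g i))"
    by (simp add: s_def[of] cinner_sum_right cinner_scaleC_right)
  also have "cmod \<dots> \<le> (\<Sum>i\<in>I. cmod (c i) * cmod (cinner s (g i)))"
    by (rule order_trans[OF norm_sum]) (simp add: norm_mult)
  finally have 1: "(norm s)\<^sup>2 \<le> (\<Sum>i\<in>I. cmod (c i) * cmod (cinner s (g i)))" .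
  have "((norm s)\<^sup>2)\<^sup>2 \<le> (\<Sum>i\<in>I. cmod (c i) * cmod (cinner s (g i)))\<^sup>2"
    using 1 by (intro power_mono) auto
  also have "\<dots> \<le> (\<Sum>i\<in>I. (cmod (c i))\<^sup>2) * (\<Sum>i\<in>I. (cmod (cinner s (g i)))\<^sup>2)"
    by (rule Cauchy_Schwarz_ineq_sum)
  also have "(\<Sum>i\<in>I. (cmod (cinner s (g i)))\<^sup>2) \<le> B * (norm s)\<^sup>2"
    using sum_le_suminf[OF sm fin] le by force
  then have "(\<Sum>i\<in>I. (cmod (c i))\<^sup>2) * (\<Sum>i\<in>I. (cmod (cinner s (g i)))\<^sup>2) \<le> (\<Sum>i\<in>I. (cmod (c i))\<^sup>2) * (B * (norm s)\<^sup>2)"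
    by (simp add: mult_left_mono sum_nonneg)
  finally have 2: "((norm s)\<^sup>2)\<^sup>2 \<le> ((\<Sum>i\<in>I. (cmod (c i))\<^sup>2) * B) * (norm s)\<^sup>2"
    by (simp add: algebra_simps)
  show ?thesis
  proof (cases "s = 0")
    case True then show ?thesis using B by (simp add: s_def[symmetric] sum_nonneg)
  next
    case False
    then have "(norm s)\<^sup>2 > 0" by simp
    from 2 have "(norm s)\<^sup>2 * (norm s)\<^sup>2 \<le> ((\<Sum>i\<in>I. (cmod (c i))\<^sup>2) * B) * (norm s)\<^sup>2"
      by (metis power2_eq_square)
    then have "(norm s)\<^sup>2 \<le> (\<Sum>i\<in>I. (cmod (c i))\<^sup>2) * B"
      using \<open>(norm s)\<^sup>2 > 0\<close> by (rule mult_right_le_imp_le)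
    then show ?thesis by (simp add: s_def mult.commute)
  qed
qed

lemma synth_summable:
  assumes bd: "bessel_bd g B" and sc: "summable (\<lambda>n. (cmod (c n))\<^sup>2)"
  shows "summable (\<lambda>n. c n *\<^sub>C (g n::'a::complex_hilbert))"
    and "(norm (\<Sum>n. c n *\<^sub>C g n))\<^sup>2 \<le> B * (\<Sum>n. (cmod (c n))\<^sup>2)"
proof -
  have B: "B > 0" using bd unfolding bessel_bd_def by auto
  show sm: "summable (\<lambda>n. c n *\<^sub>C g n)"
    unfolding summable_Cauchy
  proof (intro allI impI)
    fix e :: real assume e: "e > 0"
    then have "e\<^sup>2 / B > 0" using B by simp
    then obtain N where N: "\<And>m n. m \<ge> N \<Longrightarrow> norm (\<Sum>i\<in>{m..<n}. (cmod (c i))\<^sup>2) < e\<^sup>2 / B"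
      using sc unfolding summable_Cauchy by blast
    show "\<exists>N. \<forall>m\<ge>N. \<forall>n. norm (\<Sum>i\<in>{m..<n}. c i *\<^sub>C g i) < e"
    proof (intro exI allI impI)
      fix m n assume "m \<ge> N"
      have "(norm (\<Sum>i\<in>{m..<n}. c i *\<^sub>C g i))\<^sup>2 \<le> B * (\<Sum>i\<in>{m..<n}. (cmod (c i))\<^sup>2)"
        by (rule synth_finite[OF bd]) simp
      also have "\<dots> < B * (e\<^sup>2 / B)"
        using N[OF \<open>m \<ge> N\<close>, of n] B by (intro mult_strict_left_mono) (auto simp: sum_nonneg)
      also have "\<dots> = e\<^sup>2" using B by simp
      finally show "norm (\<Sum>i\<in>{m..<n}. c i *\<^sub>C g i) < e"
        using e by (meson abs_le_square_iff less_le_not_le not_le power2_less_imp_less abs_of_pos)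
    qed
  qed
  have lim: "(\<lambda>n. (norm (\<Sum>i<n. c i *\<^sub>C g i))\<^sup>2) \<longlonglongrightarrow> (norm (\<Sum>n. c n *\<^sub>C g n))\<^sup>2"
    by (intro tendsto_intros summable_LIMSEQ[OF sm])
  show "(norm (\<Sum>n. c n *\<^sub>C g n))\<^sup>2 \<le> B * (\<Sum>n. (cmod (c n))\<^sup>2)"
  proof (rule LIMSEQ_le_const2[OF lim], intro exI allI impI)
    fix n :: nat
    have "(norm (\<Sum>i<n. c i *\<^sub>C g i))\<^sup>2 \<le> B * (\<Sum>i<n. (cmod (c i))\<^sup>2)"
      by (rule synth_finite[OF bd]) simp
    also have "\<dots> \<le> B * (\<Sum>n. (cmod (c n))\<^sup>2)"
      using B sum_le_suminf[OF sc, of "{..<n}"] by simp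
    finally show "(norm (\<Sum>i<n. c i *\<^sub>C g i))\<^sup>2 \<le> B * (\<Sum>n. (cmod (c n))\<^sup>2)" .
  qed
qed



lemma bessel_bdD:
  assumes "bessel_bd f B"
  shows "B > 0" "summable (\<lambda>n. (cmod (cinner x (f n)))\<^sup>2)" "(\<Sum>n. (cmod (cinner x (f n)))\<^sup>2) \<le> B * (norm x)\<^sup>2"
  using assms unfolding bessel_bd_def by auto

lemma cross_summable:
  assumes "bessel_bd f Bf" "bessel_bd g Bg"
  shows "summable (\<lambda>n. cinner x (f n) *\<^sub>C (g n::'a::complex_hilbert))"
  using synth_summable(1)[OF assms(2) bessel_bdD(2)[OF assms(1)]] .

lemma cross_bound:
  assumes "bessel_bd f Bf" "bessel_bd g Bg"
  shows "(norm (cross_frame_op f g (x::'a::complex_hilbert)))\<^sup>2 \<le> Bg * (\<Sum>n. (cmod (cinner x (f n)))\<^sup>2)"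
  unfolding cross_frame_op_def
  using synth_summable(2)[OF assms(2) bessel_bdD(2)[OF assms(1)]] .

lemma cross_add:
  assumes "bessel_bd f Bf" "bessel_bd g Bg"
  shows "cross_frame_op f g (x + y::'a::complex_hilbert) = cross_frame_op f g x + cross_frame_op f g y"
  unfolding cross_frame_op_def
  by (simp add: cinner_add_left scaleC_add_left suminf_add[OF cross_summable[OF assms] cross_summable[OF assms]])

lemma cross_scaleC:
  assumes "bessel_bd f Bf" "bessel_bd g Bg"
  shows "cross_frame_op f g (a *\<^sub>C x::'a::complex_hilbert) = a *\<^sub>C cross_frame_op f g x"
  unfolding cross_frame_op_def
  by (simp add: cinner_scaleC_left scaleC_scaleC[symmetric] scaleC_suminf(1)[OF cross_summable[OF assms]])

lemma cross_scaleR: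
  assumes "bessel_bd f Bf" "bessel_bd g Bg"
  shows "cross_frame_op f g (r *\<^sub>R x::'a::complex_hilbert) = r *\<^sub>R cross_frame_op f g x"
  using cross_scaleC[OF assms, of "of_real r" x] by (simp add: scaleC_of_real)

lemma cross_diff:
  assumes "bessel_bd f Bf" "bessel_bd g Bg"
  shows "cross_frame_op f g (x - y::'a::complex_hilbert) = cross_frame_op f g x - cross_frame_op f g y"
  using cross_add[OF assms, of "x - y" y] by simp



lemma ext_frame_sum:
  fixes f xs :: "nat \<Rightarrow> 'a::complex_inner" and k :: nat
  assumes "summable (\<lambda>n. (cmod (cinner x (f n)))\<^sup>2)"
  defines "h \<equiv> (\<lambda>n. if n < k then xs n else f (n - k))"
  shows "summable (\<lambda>n. (cmod (cinner x (h n)))\<^sup>2)"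
    and "(\<Sum>n. (cmod (cinner x (h n)))\<^sup>2) = (\<Sum>n. (cmod (cinner x (f n)))\<^sup>2) + (\<Sum>i<k. (cmod (cinner x (xs i)))\<^sup>2)"
proof -
  have sh: "(\<lambda>n. (cmod (cinner x (h (n + k))))\<^sup>2) = (\<lambda>n. (cmod (cinner x (f n)))\<^sup>2)"
    by (simp add: h_def)
  show sm: "summable (\<lambda>n. (cmod (cinner x (h n)))\<^sup>2)"
    using summable_iff_shift[of "\<lambda>n. (cmod (cinner x (h n)))\<^sup>2" k] assms(1) sh by simp
  have "(\<Sum>i<k. (cmod (cinner x (h i)))\<^sup>2) = (\<Sum>i<k. (cmod (cinner x (xs i)))\<^sup>2)"
    by (rule sum.cong) (auto simp: h_def)
  then show "(\<Sum>n. (cmod (cinner x (h n)))\<^sup>2) = (\<Sum>n. (cmod (cinner x (f n)))\<^sup>2) + (\<Sum>i<k. (cmod (cinner x (xs i)))\<^sup>2)"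
    using suminf_split_initial_segment[OF sm, of k] sh by simp
qed

lemma finite_part_upper:
  "(\<Sum>i<k. (cmod (cinner x (xs i)))\<^sup>2) \<le> (\<Sum>i<k. (norm (xs i))\<^sup>2) * (norm (x::'a::complex_inner))\<^sup>2"
proof -
  have "(\<Sum>i<k. (cmod (cinner x (xs i)))\<^sup>2) \<le> (\<Sum>i<k. (norm (xs i))\<^sup>2 * (norm x)\<^sup>2)"
  proof (rule sum_mono)
    fix i
    have "cmod (cinner x (xs i)) \<le> norm x * norm (xs i)" by (rule cauchy_schwarz)
    then have "(cmod (cinner x (xs i)))\<^sup>2 \<le> (norm x * norm (xs i))\<^sup>2" by (intro power_mono) auto
    then show "(cmod (cinner x (xs i)))\<^sup>2 \<le> (norm (xs i))\<^sup>2 * (norm x)\<^sup>2" by (simp add: power_mult_distrib mult.commute)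
  qed
  then show ?thesis by (simp add: sum_distrib_right)
qed

lemma dual_imp_ext:
  fixes f g :: "nat \<Rightarrow> 'a::complex_hilbert"
  assumes bf: "bessel_bd f Bf" and bg: "bessel_bd g Bg"
    and comp: "compact_operator (\<lambda>x. x - cross_frame_op f g x)"
  shows "\<exists>(k::nat) (x::nat \<Rightarrow> 'a). frame_seq (\<lambda>n. if n < k then x n else f (n - k))"
proof -
  let ?T = "cross_frame_op f g"
  define C where "C = closure ((\<lambda>x. x - ?T x) ` cball 0 1)"
  have "compact C" using comp unfolding compact_operator_def C_def .
  then have "\<exists>k. finite k \<and> k \<subseteq> C \<and> C \<subseteq> (\<Union>x\<in>k. ball x (1/4))"
    using seq_compact_imp_totally_bounded[OF compact_imp_seq_compact[OF \<open>compact C\<close>], rule_format, of "1/4"] by simp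
  then obtain Y where Yfin: "finite Y" and Ycov: "C \<subseteq> (\<Union>y\<in>Y. ball y (1/4))"
    by blast
  obtain ys where ys: "set ys = Y" using finite_list[OF Yfin] by blast
  define k where "k = length ys"
  define xs where "xs = (\<lambda>i. ys ! i)"
  define F where "F = (\<lambda>x. (\<Sum>i<k. (cmod (cinner x (xs i)))\<^sup>2))"
  have Fnn: "F x \<ge> 0" for x unfolding F_def by (simp add: sum_nonneg)
  have unit: "1/16 \<le> F u + (norm (?T u))\<^sup>2" if u1: "norm u = 1" for u
  proof (cases "norm (?T u) \<ge> 1/4")
    case True
    then have "(1/4)\<^sup>2 \<le> (norm (?T u))\<^sup>2" by (intro power_mono) auto
    then show ?thesis using Fnn[of u] by (simp add: power2_eq_square)
  next
    case False
    have "u - ?T u \<in> C" unfolding C_def using u1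
      by (intro subsetD[OF closure_subset]) auto
    then obtain y where yY: "y \<in> Y" and dy: "dist y (u - ?T u) < 1/4" using Ycov by auto
    have "u - y = ?T u + ((u - ?T u) - y)" by simp
    then have "norm (u - y) \<le> norm (?T u) + norm ((u - ?T u) - y)"
      by (metis norm_triangle_ineq)
    also have "norm ((u - ?T u) - y) = dist y (u - ?T u)" by (simp add: dist_norm norm_minus_commute)
    finally have "norm (u - y) < 1/2" using False dy by simp
    then have "(norm (u - y))\<^sup>2 < (1/2)\<^sup>2" by (intro power_strict_mono) auto
    then have "1 + (norm y)\<^sup>2 - 2 * Re (cinner u y) < 1/4" using norm_diff_sq[of u y] u1 by (simp add: power2_eq_square)
    then have "Re (cinner u y) > 3/8" using zero_le_power2[of "norm y"] by linarith
    then have "cmod (cinner u y) > 3/8" using complex_Re_le_cmod[of "cinner u y"] by linarith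
    then have c: "(cmod (cinner u y))\<^sup>2 > (3/8)\<^sup>2" by (intro power_strict_mono) auto
    obtain i where i: "i < k" "xs i = y" using yY ys unfolding k_def xs_def by (auto simp: in_set_conv_nth)
    have "(cmod (cinner u y))\<^sup>2 \<le> F u" unfolding F_def
      using member_le_sum[of i "{..<k}" "\<lambda>i. (cmod (cinner u (xs i)))\<^sup>2"] i by auto
    then have "F u > 9/64" using c by (simp add: power2_eq_square)
    then show ?thesis using zero_le_power2[of "norm (?T u)"] by linarith
  qed
  have allx: "(norm x)\<^sup>2 / 16 \<le> F x + (norm (?T x))\<^sup>2" for x
  proof (cases "x = 0")
    case True then show ?thesis using Fnn[of x] by simp
  next
    case False
    define r where "r = 1 / norm x"
    have r: "r > 0" using False by (simp add: r_def)
    define u where "u = r *\<^sub>R x"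
    have u1: "norm u = 1" using False by (simp add: u_def r_def)
    have Fu: "F u = r\<^sup>2 * F x" unfolding F_def u_def
      by (simp add: cinner_scaleR_left norm_mult power_mult_distrib sum_distrib_left abs_of_pos[OF r])
    have Tu: "(norm (?T u))\<^sup>2 = r\<^sup>2 * (norm (?T x))\<^sup>2" unfolding u_def
      by (simp add: cross_scaleR[OF bf bg] power_mult_distrib abs_of_pos[OF r])
    have "1/16 \<le> r\<^sup>2 * (F x + (norm (?T x))\<^sup>2)" using unit[OF u1] Fu Tu by (simp add: algebra_simps)
    then have "(norm x)\<^sup>2 * (1/16) \<le> (norm x)\<^sup>2 * (r\<^sup>2 * (F x + (norm (?T x))\<^sup>2))"
      by (intro mult_left_mono) auto
    also have "\<dots> = F x + (norm (?T x))\<^sup>2" using False by (simp add: r_def power2_eq_square)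
    finally show ?thesis by simp
  qed
  define Sf where "Sf = (\<lambda>x. (\<Sum>n. (cmod (cinner x (f n)))\<^sup>2))"
  have Bg: "Bg > 0" using bessel_bdD[OF bg] by simp
  have Bf: "Bf > 0" using bessel_bdD[OF bf] by simp
  define M where "M = max 1 Bg"
  have M: "M > 0" "M \<ge> 1" "M \<ge> Bg" unfolding M_def by auto
  have Sfnn: "Sf x \<ge> 0" for x unfolding Sf_def using bessel_bdD(2)[OF bf] by (simp add: suminf_nonneg)
  define h where "h = (\<lambda>n. if n < k then xs n else f (n - k))"
  define A where "A = 1 / (16 * M)"
  define B where "B = (\<Sum>i<k. (norm (xs i))\<^sup>2) + Bf"
  have main: "summable (\<lambda>n. (cmod (cinner x (h n)))\<^sup>2) \<and> A * (norm x)\<^sup>2 \<le> (\<Sum>n. (cmod (cinner x (h n)))\<^sup>2)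
      \<and> (\<Sum>n. (cmod (cinner x (h n)))\<^sup>2) \<le> B * (norm x)\<^sup>2" for x
  proof (intro conjI)
    show "summable (\<lambda>n. (cmod (cinner x (h n)))\<^sup>2)"
      unfolding h_def by (rule ext_frame_sum(1)[OF bessel_bdD(2)[OF bf]])
    have eq: "(\<Sum>n. (cmod (cinner x (h n)))\<^sup>2) = Sf x + F x"
      unfolding h_def Sf_def F_def by (rule ext_frame_sum(2)[OF bessel_bdD(2)[OF bf]])
    have "(norm x)\<^sup>2 / 16 \<le> F x + Bg * Sf x"
      using allx[of x] cross_bound[OF bf bg, of x] unfolding Sf_def by simp
    also have "\<dots> \<le> M * (Sf x + F x)"
    proof -
      have "Bg * Sf x \<le> M * Sf x" using M Sfnn[of x] by (intro mult_right_mono) auto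
      moreover have "1 * F x \<le> M * F x" using M Fnn[of x] by (intro mult_right_mono) auto
      ultimately show ?thesis by (simp add: distrib_left)
    qed
    finally have "(norm x)\<^sup>2 / 16 \<le> M * (Sf x + F x)" .
    then show "A * (norm x)\<^sup>2 \<le> (\<Sum>n. (cmod (cinner x (h n)))\<^sup>2)"
      unfolding eq A_def using M by (simp add: field_simps)
    have "Sf x + F x \<le> Bf * (norm x)\<^sup>2 + (\<Sum>i<k. (norm (xs i))\<^sup>2) * (norm x)\<^sup>2"
      using bessel_bdD(3)[OF bf, of x] finite_part_upper[where x=x and k=k and xs=xs] unfolding Sf_def F_def by simp
    then show "(\<Sum>n. (cmod (cinner x (h n)))\<^sup>2) \<le> B * (norm x)\<^sup>2"
      unfolding eq B_def by (simp add: algebra_simps)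
  qed
  have "A > 0" unfolding A_def using M by simp
  then have "frame_seq h" unfolding frame_seq_def using main by blast
  then show ?thesis unfolding h_def by blast
qed



lemma bounded_linear_scaleC_left: "bounded_linear (\<lambda>z. z *\<^sub>C (w::'a::complex_inner))"
  by (rule bounded_linear_intro[where K="norm w"]) (auto simp: scaleC_add_left scaleR_scaleC norm_scaleC)

lemma compact_span_box:
  fixes w :: "nat \<Rightarrow> 'a::complex_inner"
  shows "compact {(\<Sum>i<k. c i *\<^sub>C w i) | c. \<forall>i<k. cmod (c i) \<le> M}"
proof (induction k)
  case 0
  have "{(\<Sum>i<0. c i *\<^sub>C w i) | c. \<forall>i<0. cmod (c i) \<le> M} = {0}" by auto
  then show ?case by simp
next
  case (Suc k)
  let ?D = "{(\<Sum>i<k. c i *\<^sub>C w i) | c. \<forall>i<k. cmod (c i) \<le> M}"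
  let ?E = "(\<lambda>z. z *\<^sub>C w k) ` cball 0 M"
  have cE: "compact ?E"
    by (intro compact_continuous_image linear_continuous_on bounded_linear_scaleC_left compact_cball)
  have eq: "{(\<Sum>i<Suc k. c i *\<^sub>C w i) | c. \<forall>i<Suc k. cmod (c i) \<le> M} = {x + y | x y. x \<in> ?D \<and> y \<in> ?E}"
  proof (intro equalityI subsetI)
    fix v assume "v \<in> {(\<Sum>i<Suc k. c i *\<^sub>C w i) | c. \<forall>i<Suc k. cmod (c i) \<le> M}"
    then obtain c where v: "v = (\<Sum>i<Suc k. c i *\<^sub>C w i)" and c: "\<forall>i<Suc k. cmod (c i) \<le> M" by blast
    have "(\<Sum>i<k. c i *\<^sub>C w i) \<in> ?D" using c by auto
    moreover have "c k *\<^sub>C w k \<in> ?E" using c by auto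
    ultimately show "v \<in> {x + y | x y. x \<in> ?D \<and> y \<in> ?E}" unfolding v by auto
  next
    fix v assume "v \<in> {x + y | x y. x \<in> ?D \<and> y \<in> ?E}"
    then obtain c z where v: "v = (\<Sum>i<k. c i *\<^sub>C w i) + z *\<^sub>C w k"
      and c: "\<forall>i<k. cmod (c i) \<le> M" and z: "cmod z \<le> M" by auto
    define c' where "c' = c(k := z)"
    have "(\<Sum>i<k. c' i *\<^sub>C w i) = (\<Sum>i<k. c i *\<^sub>C w i)" by (rule sum.cong) (auto simp: c'_def)
    then have "v = (\<Sum>i<Suc k. c' i *\<^sub>C w i)" unfolding v by (simp add: c'_def)
    moreover have "\<forall>i<Suc k. cmod (c' i) \<le> M" using c z by (auto simp: c'_def less_Suc_eq)
    ultimately show "v \<in> {(\<Sum>i<Suc k. c i *\<^sub>C w i) | c. \<forall>i<Suc k. cmod (c i) \<le> M}" by blast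
  qed
  show ?case unfolding eq by (rule compact_sums[OF Suc.IH cE])
qed

lemma compact_closure_subset:
  fixes D :: "'a::metric_space set"
  assumes "compact D" "X \<subseteq> D"
  shows "compact (closure X)"
proof -
  have "closure X \<subseteq> D" by (rule closure_minimal[OF assms(2) compact_imp_closed[OF assms(1)]])
  then have "closure X = D \<inter> closure X" by blast
  then show ?thesis using compact_Int_closed[OF assms(1), of "closure X"] by simp
qed



locale pos_frame =
  fixes h :: "nat \<Rightarrow> 'a::complex_hilbert" and A B :: real
  assumes hb: "bessel_bd h B" and A0: "0 < A" and AB: "A < B"
    and lower: "\<And>x. A * (norm x)\<^sup>2 \<le> (\<Sum>n. (cmod (cinner x (h n)))\<^sup>2)"
begin

definition S where "S x = cross_frame_op h h x"
definition R where "R x = x - (1/B) *\<^sub>R S x"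
definition q where "q = 1 - A/B"

lemma B0: "B > 0" using A0 AB by simp
lemma q_bounds: "0 < q" "q < 1" using A0 AB B0 by (auto simp: q_def field_simps)

lemma S_add: "S (x + y) = S x + S y" unfolding S_def by (rule cross_add[OF hb hb])
lemma S_scaleC: "S (a *\<^sub>C x) = a *\<^sub>C S x" unfolding S_def by (rule cross_scaleC[OF hb hb])

lemma S_inner: "cinner (S x) y = (\<Sum>n. cinner x (h n) * cinner (h n) y)"
  and S_inner_summable: "summable (\<lambda>n. cinner x (h n) * cinner (h n) y)"
  unfolding S_def cross_frame_op_def
  using cinner_suminf_left[OF cross_summable[OF hb hb, of x], of y]
  by (auto simp: cinner_scaleC_left)

lemma S_herm: "cinner (S x) y = cnj (cinner (S y) x)"
proof -
  have "cnj (cinner (S y) x) = (\<Sum>n. cnj (cinner y (h n) * cinner (h n) x))"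
    unfolding S_inner using bounded_linear.suminf[OF bounded_linear_cnj S_inner_summable[of y x]] by simp
  also have "\<dots> = (\<Sum>n. cinner x (h n) * cinner (h n) y)"
    by (rule suminf_cong) (simp add: cinner_commute[of "h _" y] cinner_commute[of x "h _"] mult.commute)
  finally show ?thesis unfolding S_inner by simp
qed

lemma S_quad: "cinner (S x) x = of_real (\<Sum>n. (cmod (cinner x (h n)))\<^sup>2)"
proof -
  have "cinner (S x) x = (\<Sum>n. of_real ((cmod (cinner x (h n)))\<^sup>2))"
    unfolding S_inner by (rule suminf_cong) (simp only: cinner_commute[of "h _" x] complex_norm_square)
  also have "\<dots> = of_real (\<Sum>n. (cmod (cinner x (h n)))\<^sup>2)"
    by (rule suminf_of_real[symmetric]) (rule bessel_bdD(2)[OF hb])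
  finally show ?thesis .
qed

lemma R_add: "R (x + y) = R x + R y" unfolding R_def by (simp add: S_add scaleR_add_right)
lemma R_scaleC: "R (a *\<^sub>C x) = a *\<^sub>C R x"
  unfolding R_def by (simp add: S_scaleC scaleC_diff_right scaleC_scaleR)
lemma R_inner: "cinner (R x) y = cinner x y - of_real (1/B) * cinner (S x) y"
  unfolding R_def by (simp add: cinner_diff_left cinner_scaleR_left)
lemma R_herm: "cinner (R x) y = cnj (cinner (R y) x)"
proof -
  have "cnj (cinner (R y) x) = cnj (cinner y x) - of_real (1/B) * cnj (cinner (S y) x)"
    unfolding R_inner by simp
  also have "\<dots> = cinner x y - of_real (1/B) * cinner (S x) y"
    using cinner_commute[of x y] S_herm[of x y] by simp
  finally show ?thesis unfolding R_inner by simp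
qed
lemma R_sa: "cinner (R x) y = cinner x (R y)"
  using R_herm[of x y] cinner_commute[of x "R y"] by simp

lemma R_quad: "cinner (R x) x = of_real ((norm x)\<^sup>2 - (1/B) * (\<Sum>n. (cmod (cinner x (h n)))\<^sup>2))"
  unfolding R_inner S_quad cinner_self by simp

lemma R_quad_bounds: "0 \<le> Re (cinner (R x) x)" "Re (cinner (R x) x) \<le> q * (norm x)\<^sup>2"
proof -
  have "(\<Sum>n. (cmod (cinner x (h n)))\<^sup>2) \<le> B * (norm x)\<^sup>2" by (rule bessel_bdD(3)[OF hb])
  then have "(1/B) * (\<Sum>n. (cmod (cinner x (h n)))\<^sup>2) \<le> (norm x)\<^sup>2" using B0 by (simp add: field_simps)
  then show "0 \<le> Re (cinner (R x) x)" unfolding R_quad by simp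
  have "A * (norm x)\<^sup>2 \<le> (\<Sum>n. (cmod (cinner x (h n)))\<^sup>2)" by (rule lower)
  then have "(A/B) * (norm x)\<^sup>2 \<le> (1/B) * (\<Sum>n. (cmod (cinner x (h n)))\<^sup>2)" using B0 by (simp add: field_simps)
  then show "Re (cinner (R x) x) \<le> q * (norm x)\<^sup>2" unfolding R_quad q_def by (simp add: algebra_simps)
qed

lemma R_norm: "norm (R x) \<le> q * norm x"
proof -
  have cs: "(cmod (cinner (R x) (R x)))\<^sup>2 \<le> Re (cinner (R x) x) * Re (cinner (R (R x)) (R x))"
  proof -
    have a: "cinner (R (u + v)) w = cinner (R u) w + cinner (R v) w" for u v w
      by (simp add: R_add cinner_add_left)
    have b: "cinner (R (a *\<^sub>C u)) w = a * cinner (R u) w" for a u w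
      by (simp add: R_scaleC cinner_scaleC_left)
    have c: "cinner (R u) w = cnj (cinner (R w) u)" for u w by (rule R_herm)
    have d: "0 \<le> Re (cinner (R u) u)" for u by (rule R_quad_bounds(1))
    show ?thesis using form_cauchy_schwarz[of "\<lambda>u v. cinner (R u) v", OF a b c d] by simp
  qed
  have q0: "q \<ge> 0" using q_bounds by simp
  have m: "Re (cinner (R x) x) * Re (cinner (R (R x)) (R x)) \<le> (q * (norm x)\<^sup>2) * (q * (norm (R x))\<^sup>2)"
  proof (rule mult_mono)
    show "Re (cinner (R x) x) \<le> q * (norm x)\<^sup>2" by (rule R_quad_bounds(2))
    show "Re (cinner (R (R x)) (R x)) \<le> q * (norm (R x))\<^sup>2" by (rule R_quad_bounds(2))
    show "0 \<le> q * (norm x)\<^sup>2" using q0 by simp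
    show "0 \<le> Re (cinner (R (R x)) (R x))" by (rule R_quad_bounds(1))
  qed
  have e1: "(cmod (cinner (R x) (R x)))\<^sup>2 = (norm (R x))\<^sup>2 * (norm (R x))\<^sup>2"
    unfolding cinner_self norm_of_real by (simp add: power2_eq_square)
  have e2: "(q * (norm x)\<^sup>2) * (q * (norm (R x))\<^sup>2) = (q * norm x)\<^sup>2 * (norm (R x))\<^sup>2"
    by (simp add: power2_eq_square)
  have main: "(norm (R x))\<^sup>2 * (norm (R x))\<^sup>2 \<le> (q * norm x)\<^sup>2 * (norm (R x))\<^sup>2"
    using cs m unfolding e1 e2 by (rule order_trans)
  have "(norm (R x))\<^sup>2 \<le> (q * norm x)\<^sup>2"
  proof (cases "R x = 0")
    case False
    then have "(norm (R x))\<^sup>2 > 0" by simp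
    with main show ?thesis by (rule mult_right_le_imp_le)
  next
    case True then show ?thesis by simp
  qed
  then show ?thesis by (rule power2_le_imp_le) (use q0 in simp)
qed

end


context pos_frame begin

lemma S_diff: "S (x - y) = S x - S y" unfolding S_def by (rule cross_diff[OF hb hb])
lemma R_diff: "R (x - y) = R x - R y" unfolding R_def by (simp add: S_diff scaleR_diff_right)

lemma Rn_add: "(R ^^ j) (x + y) = (R ^^ j) x + (R ^^ j) y"
  by (induction j) (simp_all add: R_add)
lemma Rn_diff: "(R ^^ j) (x - y) = (R ^^ j) x - (R ^^ j) y"
  by (induction j) (simp_all add: R_diff)
lemma Rn_scaleC: "(R ^^ j) (a *\<^sub>C x) = a *\<^sub>C (R ^^ j) x"
  by (induction j) (simp_all add: R_scaleC)
lemma Rn_scaleR: "(R ^^ j) (r *\<^sub>R x) = r *\<^sub>R (R ^^ j) x"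
  using Rn_scaleC[of j "of_real r" x] by (simp add: scaleC_of_real)
lemma Rn_norm: "norm ((R ^^ j) x) \<le> q ^ j * norm x"
proof (induction j)
  case 0 then show ?case by simp
next
  case (Suc j)
  have "norm ((R ^^ Suc j) x) \<le> q * norm ((R ^^ j) x)" using R_norm by simp
  also have "\<dots> \<le> q * (q ^ j * norm x)" using Suc q_bounds by (intro mult_left_mono) auto
  finally show ?case by simp
qed
lemma Rn_sa: "cinner ((R ^^ j) x) y = cinner x ((R ^^ j) y)"
proof (induction j arbitrary: y)
  case 0 then show ?case by simp
next
  case (Suc j)
  have "cinner ((R ^^ Suc j) x) y = cinner ((R ^^ j) x) (R y)" using R_sa by simp
  also have "\<dots> = cinner x ((R ^^ j) (R y))" by (rule Suc.IH)
  also have "(R ^^ j) (R y) = (R ^^ Suc j) y" by (simp add: funpow_swap1)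
  finally show ?case .
qed

lemma geo_summable: "summable (\<lambda>j. q ^ j * c)"
  using q_bounds by (intro summable_mult2 summable_geometric) simp

lemma Rn_summable: "summable (\<lambda>j. (R ^^ j) x)"
  by (rule summable_comparison_test[OF _ geo_summable[of "norm x"]]) (auto intro: Rn_norm)

definition Q where "Q x = (1/B) *\<^sub>R (\<Sum>j. (R ^^ j) x)"

lemma Q_add: "Q (x + y) = Q x + Q y"
  unfolding Q_def Rn_add suminf_add[OF Rn_summable Rn_summable, symmetric] by (simp add: scaleR_add_right)
lemma Q_scaleC: "Q (a *\<^sub>C x) = a *\<^sub>C Q x"
  unfolding Q_def by (simp add: Rn_scaleC scaleC_suminf(1)[OF Rn_summable] scaleC_scaleR)
lemma Q_scaleR: "Q (r *\<^sub>R x) = r *\<^sub>R Q x"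
  using Q_scaleC[of "of_real r" x] by (simp add: scaleC_of_real)
lemma Q_diff: "Q (x - y) = Q x - Q y"
  using Q_add[of "x - y" y] by simp

lemma Q_norm: "norm (Q x) \<le> (1/A) * norm x"
proof -
  have "norm (\<Sum>j. (R ^^ j) x) \<le> (\<Sum>j. q ^ j * norm x)"
    by (rule norm_suminf_le[OF Rn_norm geo_summable])
  also have "\<dots> = (1 / (1 - q)) * norm x"
    using suminf_mult2[OF summable_geometric, of q "norm x"] q_bounds suminf_geometric[of q] by simp
  also have "1 / (1 - q) = B / A" unfolding q_def using A0 B0 by (simp add: field_simps)
  finally have "norm (\<Sum>j. (R ^^ j) x) \<le> B / A * norm x" .
  then have "(1/B) * norm (\<Sum>j. (R ^^ j) x) \<le> (1/B) * (B / A * norm x)"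
    using B0 by (intro mult_left_mono) auto
  then show ?thesis unfolding Q_def using B0 by simp
qed

lemma Q_bl: "bounded_linear Q"
  by (rule bounded_linear_intro[where K="1/A"]) (auto simp: Q_add Q_scaleR intro: order_trans[OF Q_norm] simp: mult.commute)

lemma Q_sa: "cinner (Q x) y = cinner x (Q y)"
proof -
  have "cinner (Q x) y = of_real (1/B) * (\<Sum>j. cinner ((R ^^ j) x) y)"
    unfolding Q_def by (simp add: cinner_scaleR_left cinner_suminf_left(1)[OF Rn_summable])
  also have "(\<Sum>j. cinner ((R ^^ j) x) y) = (\<Sum>j. cinner x ((R ^^ j) y))"
    by (simp add: Rn_sa)
  also have "of_real (1/B) * \<dots> = cinner x (Q y)"
    unfolding Q_def by (simp add: cinner_scaleR_right cinner_suminf_right(1)[OF Rn_summable])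
  finally show ?thesis .
qed

lemma Q_S: "Q (S x) = x"
proof -
  have Sx: "S x = B *\<^sub>R (x - R x)" unfolding R_def using B0 by simp
  have lim0: "(\<lambda>j. (R ^^ j) x) \<longlonglongrightarrow> 0"
  proof (rule Lim_null_comparison[where g="\<lambda>j. q ^ j * norm x"])
    show "\<forall>\<^sub>F j in sequentially. norm ((R ^^ j) x) \<le> q ^ j * norm x" using Rn_norm by simp
    show "(\<lambda>j. q ^ j * norm x) \<longlonglongrightarrow> 0"
      using q_bounds by (intro tendsto_mult_left_zero LIMSEQ_power_zero) simp
  qed
  have "(\<lambda>j. (R ^^ j) x - (R ^^ Suc j) x) sums ((R ^^ 0) x - 0)"
    by (rule telescope_sums'[OF lim0])
  then have "(\<lambda>j. B *\<^sub>R ((R ^^ j) x - (R ^^ Suc j) x)) sums (B *\<^sub>R x)"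
    using sums_scaleR_right by fastforce
  moreover have "(R ^^ j) (S x) = B *\<^sub>R ((R ^^ j) x - (R ^^ Suc j) x)" for j
    unfolding Sx Rn_scaleR Rn_diff by (simp add: funpow_swap1)
  ultimately have "(\<lambda>j. (R ^^ j) (S x)) sums (B *\<^sub>R x)" by simp
  then show ?thesis unfolding Q_def using B0 by (simp add: sums_iff)
qed

end


context pos_frame begin
lemma Q_zero: "Q 0 = 0" using Q_scaleR[of 0 0] by simp
lemma Q_sum: "Q (\<Sum>i\<in>I. v i) = (\<Sum>i\<in>I. Q (v i))"
  by (induction I rule: infinite_finite_induct) (simp_all add: Q_zero Q_add)
end

lemma ext_imp_dual:
  fixes f xs :: "nat \<Rightarrow> 'a::complex_hilbert"
  assumes bf: "bessel_bd f Bf" and fr: "frame_seq (\<lambda>n. if n < k then xs n else f (n - k))"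
  shows "\<exists>g. bessel_seq g \<and> essentially_dual f g"
proof -
  define h where "h = (\<lambda>n. if n < k then xs n else f (n - k))"
  obtain A B0 where A0: "0 < A" and fx: "\<And>x. summable (\<lambda>n. (cmod (cinner x (h n)))\<^sup>2) \<and>
       A * (norm x)\<^sup>2 \<le> (\<Sum>n. (cmod (cinner x (h n)))\<^sup>2) \<and>
       (\<Sum>n. (cmod (cinner x (h n)))\<^sup>2) \<le> B0 * (norm x)\<^sup>2"
    using fr unfolding frame_seq_def h_def by blast
  define B where "B = max B0 0 + A + 1"
  have hb: "bessel_bd h B" unfolding bessel_bd_def
  proof (intro conjI allI)
    show "B > 0" unfolding B_def using A0 by simp
    fix x
    show "summable (\<lambda>n. (cmod (cinner x (h n)))\<^sup>2)" using fx by blast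
    have "B0 * (norm x)\<^sup>2 \<le> B * (norm x)\<^sup>2" unfolding B_def using A0 by (intro mult_right_mono) auto
    then show "(\<Sum>n. (cmod (cinner x (h n)))\<^sup>2) \<le> B * (norm x)\<^sup>2" using fx[of x] by linarith
  qed
  interpret pos_frame h A B
  proof
    show "bessel_bd h B" by (rule hb)
    show "0 < A" by (rule A0)
    show "A < B" unfolding B_def by simp
    show "A * (norm x)\<^sup>2 \<le> (\<Sum>n. (cmod (cinner x (h n)))\<^sup>2)" for x using fx by blast
  qed
  define g where "g = (\<lambda>n. Q (f n))"
  have Bf0: "Bf > 0" using bessel_bdD(1)[OF bf] .
  have gb: "bessel_bd g (Bf / A\<^sup>2)" unfolding bessel_bd_def
  proof (intro conjI allI)
    show "Bf / A\<^sup>2 > 0" using Bf0 A0 by simp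
    fix x
    have eq: "(\<lambda>n. (cmod (cinner x (g n)))\<^sup>2) = (\<lambda>n. (cmod (cinner (Q x) (f n)))\<^sup>2)"
      unfolding g_def by (simp add: Q_sa)
    show "summable (\<lambda>n. (cmod (cinner x (g n)))\<^sup>2)" unfolding eq by (rule bessel_bdD(2)[OF bf])
    have "(\<Sum>n. (cmod (cinner x (g n)))\<^sup>2) \<le> Bf * (norm (Q x))\<^sup>2" unfolding eq by (rule bessel_bdD(3)[OF bf])
    also have "\<dots> \<le> Bf * ((1/A) * norm x)\<^sup>2"
      using Bf0 Q_norm[of x] by (intro mult_left_mono power_mono) auto
    also have "\<dots> = Bf / A\<^sup>2 * (norm x)\<^sup>2" by (simp add: power_mult_distrib power_divide)
    finally show "(\<Sum>n. (cmod (cinner x (g n)))\<^sup>2) \<le> Bf / A\<^sup>2 * (norm x)\<^sup>2" .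
  qed
  define Fin where "Fin x = (\<Sum>i<k. cinner x (xs i) *\<^sub>C xs i)" for x
  have cross_g: "cross_frame_op f g x = Q (cross_frame_op f f x)" for x
  proof -
    have "cross_frame_op f g x = (\<Sum>n. Q (cinner x (f n) *\<^sub>C f n))"
      unfolding cross_frame_op_def g_def by (simp add: Q_scaleC)
    also have "\<dots> = Q (cross_frame_op f f x)"
      unfolding cross_frame_op_def by (rule bounded_linear.suminf[OF Q_bl cross_summable[OF bf bf], symmetric])
    finally show ?thesis .
  qed
  have S_split: "S x = cross_frame_op f f x + Fin x" for x
  proof -
    have sm: "summable (\<lambda>n. cinner x (h n) *\<^sub>C h n)" by (rule cross_summable[OF hb hb])
    have "S x = (\<Sum>n. cinner x (h (n + k)) *\<^sub>C h (n + k)) + (\<Sum>i<k. cinner x (h i) *\<^sub>C h i)"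
      unfolding S_def cross_frame_op_def by (rule suminf_split_initial_segment[OF sm])
    also have "(\<Sum>n. cinner x (h (n + k)) *\<^sub>C h (n + k)) = cross_frame_op f f x"
      unfolding cross_frame_op_def h_def by simp
    also have "(\<Sum>i<k. cinner x (h i) *\<^sub>C h i) = Fin x"
      unfolding Fin_def h_def by (rule sum.cong) auto
    finally show ?thesis .
  qed
  have K: "x - cross_frame_op f g x = (\<Sum>i<k. cinner x (xs i) *\<^sub>C Q (xs i))" for x
  proof -
    have "cross_frame_op f f x = S x - Fin x" using S_split[of x] by simp
    then have "x - cross_frame_op f g x = x - (Q (S x) - Q (Fin x))" unfolding cross_g by (simp add: Q_diff)
    also have "\<dots> = Q (Fin x)" by (simp add: Q_S)
    also have "\<dots> = (\<Sum>i<k. cinner x (xs i) *\<^sub>C Q (xs i))" unfolding Fin_def Q_sum by (simp add: Q_scaleC)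
    finally show ?thesis .
  qed
  define M where "M = (\<Sum>i<k. norm (xs i))"
  have sub: "(\<lambda>x. x - cross_frame_op f g x) ` cball 0 1 \<subseteq>
      {(\<Sum>i<k. c i *\<^sub>C Q (xs i)) | c. \<forall>i<k. cmod (c i) \<le> M}"
  proof
    fix v assume "v \<in> (\<lambda>x. x - cross_frame_op f g x) ` cball 0 1"
    then obtain x where x: "norm x \<le> 1" and v: "v = x - cross_frame_op f g x" by auto
    have "cmod (cinner x (xs i)) \<le> M" if "i < k" for i
    proof -
      have "cmod (cinner x (xs i)) \<le> norm x * norm (xs i)" by (rule cauchy_schwarz)
      also have "\<dots> \<le> 1 * norm (xs i)" using x by (intro mult_right_mono) auto
      also have "\<dots> \<le> M" unfolding M_def using that by (auto intro: member_le_sum)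
      finally show ?thesis .
    qed
    then show "v \<in> {(\<Sum>i<k. c i *\<^sub>C Q (xs i)) | c. \<forall>i<k. cmod (c i) \<le> M}"
      unfolding v K by (intro CollectI exI[of _ "\<lambda>i. cinner x (xs i)"]) auto
  qed
  have "compact_operator (\<lambda>x. x - cross_frame_op f g x)"
    unfolding compact_operator_def by (rule compact_closure_subset[OF compact_span_box sub])
  then have "essentially_dual f g"
    unfolding essentially_dual_def bessel_seq_bd using bf gb by blast
  moreover have "bessel_seq g" unfolding bessel_seq_bd using gb by blast
  ultimately show ?thesis by blast
qed

theorem theorem2p7:
  fixes f :: "nat \<Rightarrow> 'a::complex_hilbert"
  assumes "separable_type TYPE('a)"
    and "\<not> finite_dim_complex TYPE('a)"
    and "bessel_seq f"
  shows "(\<exists>(k::nat) (x::nat \<Rightarrow> 'a). frame_seq (\<lambda>n. if n < k then x n else f (n - k)))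
         \<longleftrightarrow> (\<exists>g. bessel_seq g \<and> essentially_dual f g)"
proof
  obtain Bf where bf: "bessel_bd f Bf" using assms(3) unfolding bessel_seq_bd by blast
  {
    assume "\<exists>(k::nat) (x::nat \<Rightarrow> 'a). frame_seq (\<lambda>n. if n < k then x n else f (n - k))"
    then obtain k x where "frame_seq (\<lambda>n. if n < k then x n else f (n - k))" by blast
    then show "\<exists>g. bessel_seq g \<and> essentially_dual f g" by (rule ext_imp_dual[OF bf])
  }
  {
    assume "\<exists>g. bessel_seq g \<and> essentially_dual f g"
    then obtain g where ed: "essentially_dual f g" by blast
    then obtain Bg where bg: "bessel_bd g Bg" unfolding essentially_dual_def bessel_seq_bd by blast
    have "compact_operator (\<lambda>x. x - cross_frame_op f g x)" using ed unfolding essentially_dual_def by blast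
    then show "\<exists>(k::nat) (x::nat \<Rightarrow> 'a). frame_seq (\<lambda>n. if n < k then x n else f (n - k))"
      by (rule dual_imp_ext[OF bf bg])
  }
qed


end
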